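(* Let $\mu$ be a probability measure on $[0,1]$, absolutely continuous with continuous density $f_\mu$, that is symmetric ($f_\mu(x)=f_\mu(1-x)$ for all $x\in[0,1]$) and single-peaked, and let $q\in(0,1)$. Then the median mechanism, i.e. the percentile mechanism $\mathcal{PM}_p$ with $p=\frac12$, is optimal.
   Context: Single-peaked: there is $m\in[0,1]$ such that $f_\mu$ is non-decreasing on $[0,m]$, non-increasing on $[m,1]$, and $m$ is the unique maximizer of $f_\mu$. Single-facility setting: $n$ agents at $\vec x\in[0,1]^n$; a facility at $y$ with capacity $q$ accommodates the $\lfloor qn\rfloor$ agents closest to $y$ (ties arbitrary); an accommodated agent $i$ gets utility $1-|x_i-y|$, others $0$; normalized social welfare $SW(\vec x,y)=\frac1n\sum_i u_i$. $\mathcal{PM}_p$ places the facility at the $(\lfloor p(n-1)\rfloor+1)$-th smallest reported position. $R_{\mu,q}(y)$ is the smallest $r\ge0$ with $\mu([y-r,y+r])=q$, and $\mathcal{W}(y)=\int_{[y-R_{\mu,q}(y),y+R_{\mu,q}(y)]}|x-y|\,d\mu(x)$. With $X_1,\dots,X_n$ i.i.d. of law $\mu$, $\mathcal{PM}_p$ is optimal if $\lim_{n\to\infty}\mathbb{E}[SW(\vec X,\mathcal{PM}_p(\vec X))]$ exists and equals $\max_{y\in[0,1]}(q-\mathcal{W}(y))$. *)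

theory Defs
  imports "HOL-Probability.Probability"
begin

definition dens_measure :: "(real \<Rightarrow> real) \<Rightarrow> real measure" where
  "dens_measure f = density lborel (\<lambda>x. ennreal (f x * indicator {0..1} x))"

definition single_peaked :: "(real \<Rightarrow> real) \<Rightarrow> bool" where
  "single_peaked f \<longleftrightarrow> (\<exists>m\<in>{0..1}.
      mono_on {0..m} f \<and> antimono_on {m..1} f \<and>
      (\<forall>x\<in>{0..1}. x \<noteq> m \<longrightarrow> f x < f m))"

definition symmetric_density :: "(real \<Rightarrow> real) \<Rightarrow> bool" where
  "symmetric_density f \<longleftrightarrow> (\<forall>x\<in>{0..1}. f x = f (1 - x))"

text \<open>Percentile mechanism: the (floor(p(n-1))+1)-th smallest of the n reported positions
  x 0, ..., x (n-1) (0-based index floor(p(n-1)) in the sorted list).\<close>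
definition PM :: "real \<Rightarrow> nat \<Rightarrow> (nat \<Rightarrow> real) \<Rightarrow> real" where
  "PM p n x = sort (map x [0..<n]) ! nat \<lfloor>p * real (n - 1)\<rfloor>"

text \<open>Normalized social welfare: the floor(q n) agents closest to y are accommodated, each
  obtaining 1 - |x_i - y|; the total does not depend on how ties are broken.\<close>
definition SW :: "real \<Rightarrow> nat \<Rightarrow> (nat \<Rightarrow> real) \<Rightarrow> real \<Rightarrow> real" where
  "SW q n x y = (\<Sum>j < nat \<lfloor>q * real n\<rfloor>.
       1 - sort (map (\<lambda>i. \<bar>x i - y\<bar>) [0..<n]) ! j) / real n"

definition R_rad :: "real measure \<Rightarrow> real \<Rightarrow> real \<Rightarrow> real" where
  "R_rad \<mu> q y = Inf {r. r \<ge> 0 \<and> measure \<mu> {y - r..y + r} = q}"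

definition W_cost :: "real measure \<Rightarrow> real \<Rightarrow> real \<Rightarrow> real" where
  "W_cost \<mu> q y = (LINT x:{y - R_rad \<mu> q y..y + R_rad \<mu> q y}|\<mu>. \<bar>x - y\<bar>)"

definition exp_SW :: "real measure \<Rightarrow> real \<Rightarrow> real \<Rightarrow> nat \<Rightarrow> real" where
  "exp_SW \<mu> q p n = (\<integral>X. SW q n X (PM p n X) \<partial>(PiM {..<n} (\<lambda>_. \<mu>)))"

definition PM_optimal :: "real measure \<Rightarrow> real \<Rightarrow> real \<Rightarrow> bool" where
  "PM_optimal \<mu> q p \<longleftrightarrow> (\<exists>L. (exp_SW \<mu> q p \<longlonglongrightarrow> L) \<and>
      (\<exists>y0\<in>{0..1}. L = q - W_cost \<mu> q y0 \<and> (\<forall>y\<in>{0..1}. q - W_cost \<mu> q y \<le> L)))"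

end

theory Submission
  imports Defs
begin

definition ft :: "(real \<Rightarrow> real) \<Rightarrow> real \<Rightarrow> real" where
  "ft f x = f x * indicator {0..1} x"

locale dsetup =
  fixes f :: "real \<Rightarrow> real" and q :: real
  assumes cont: "continuous_on {0..1} f"
    and nonneg: "\<forall>x\<in>{0..1}. f x \<ge> 0"
    and prob: "prob_space (dens_measure f)"
    and sym: "symmetric_density f"
    and sp: "single_peaked f"
    and q0: "0 < q" and q1: "q < 1"
begin

abbreviation "\<mu> \<equiv> dens_measure f"

lemma ft_meas[measurable]: "ft f \<in> borel_measurable borel"
proof -
  have "(\<lambda>x. indicator {0..1} x *\<^sub>R f x) \<in> borel_measurable borel"
    by (rule borel_measurable_continuous_on_indicator[OF _ cont]) auto
  then show ?thesis unfolding ft_def by (simp add: mult.commute)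
qed

lemma ft_nonneg: "ft f x \<ge> 0"
proof (cases "x \<in> {0..1}")
  case True then show ?thesis using nonneg by (simp add: ft_def)
next
  case False then show ?thesis by (simp add: ft_def)
qed

lemma ft_sym: "ft f (1 - x) = ft f x"
proof (cases "x \<in> {0..1}")
  case True
  have "f x = f (1 - x)" using sym True unfolding symmetric_density_def by (rule bspec)
  then show ?thesis using True by (simp add: ft_def)
next
  case False
  then have "1 - x \<notin> {0..1}" by auto
  then show ?thesis using False by (simp add: ft_def)
qed

lemma mu_eq: "\<mu> = density lborel (\<lambda>x. ennreal (ft f x))"
  by (simp add: dens_measure_def ft_def)

lemma sets_mu[simp, measurable_cong]: "sets \<mu> = sets borel"
  by (simp add: dens_measure_def)

lemma space_mu[simp]: "space \<mu> = UNIV"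
  by (simp add: dens_measure_def)

lemma rd: "real_distribution \<mu>"
  using prob by (simp add: real_distribution_def real_distribution_axioms_def)

lemma emeasure_mu: "A \<in> sets borel \<Longrightarrow> emeasure \<mu> A = (\<integral>\<^sup>+x. ennreal (ft f x) * indicator A x \<partial>lborel)"
  unfolding mu_eq by (subst emeasure_density) auto

lemma AE_01: "AE x in \<mu>. x \<in> {0..1}"
  unfolding mu_eq
proof (subst AE_density)
  show "(\<lambda>x. ennreal (ft f x)) \<in> borel_measurable lborel" by simp
  show "AE x in lborel. 0 < ennreal (ft f x) \<longrightarrow> x \<in> {0..1}"
    by (auto simp: ft_def indicator_def)
qed

lemma singleton0: "measure \<mu> {a} = 0"
proof -
  have "emeasure \<mu> {a} = (\<integral>\<^sup>+x. ennreal (ft f x) * indicator {a} x \<partial>lborel)"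
    by (rule emeasure_mu) auto
  also have "\<dots> = (\<integral>\<^sup>+x. 0 \<partial>(lborel::real measure))"
    using AE_lborel_singleton[of a] by (intro nn_integral_cong_AE) (auto elim!: eventually_mono simp: indicator_def)
  finally show ?thesis by (simp add: measure_def)
qed

lemma reflect: "A \<in> sets borel \<Longrightarrow> measure \<mu> A = measure \<mu> ((\<lambda>x. 1 - x) -` A)"
proof -
  assume A[measurable]: "A \<in> sets borel"
  have "emeasure \<mu> A = (\<integral>\<^sup>+x. ennreal (ft f x) * indicator A x \<partial>lborel)"
    by (rule emeasure_mu) fact
  also have "\<dots> = ennreal \<bar>-1\<bar> * (\<integral>\<^sup>+x. ennreal (ft f (1 + -1 * x)) * indicator A (1 + -1*x) \<partial>lborel)"
    by (rule nn_integral_real_affine[where c="-1" and t=1 and f="\<lambda>x. ennreal (ft f x) * indicator A x"]) auto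
  also have "\<dots> = (\<integral>\<^sup>+x. ennreal (ft f x) * indicator ((\<lambda>x. 1 - x) -` A) x \<partial>lborel)"
    using ft_sym by (auto simp: indicator_def intro!: nn_integral_cong)
  also have "\<dots> = emeasure \<mu> ((\<lambda>x. 1 - x) -` A)"
    using measurable_sets[OF _ A, of "\<lambda>x. 1-x" borel]
    by (intro emeasure_mu[symmetric]) simp
  finally show ?thesis by (simp add: measure_def)
qed

end

context dsetup begin

abbreviation "F \<equiv> cdf \<mu>"

lemma fm: "finite_measure \<mu>"
  using prob by (simp add: prob_space_def)

lemma fbm: "finite_borel_measure \<mu>"
  using rd real_distribution.finite_borel_measure_M by blast

lemma Ioc_eq: "a \<le> b \<Longrightarrow> measure \<mu> {a<..b} = F b - F a"
proof (cases "a = b")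
  case False
  assume "a \<le> b" with False have "a < b" by simp
  then show ?thesis using finite_borel_measure.cdf_diff_eq[OF fbm] by simp
qed simp

lemma Icc_eq: "a \<le> b \<Longrightarrow> measure \<mu> {a..b} = F b - F a"
proof -
  assume ab: "a \<le> b"
  have "{a..b} = {a} \<union> {a<..b}" using ab by auto
  then have "measure \<mu> {a..b} = measure \<mu> {a} + measure \<mu> {a<..b}"
    using finite_measure.finite_measure_Union[OF fm, of "{a}" "{a<..b}"] by simp
  then show ?thesis using singleton0 Ioc_eq[OF ab] by simp
qed

lemma F_cont: "isCont F x"
  using finite_borel_measure.isCont_cdf[OF fbm] singleton0 by simp

lemma F_contOn: "continuous_on S F"
  using F_cont by (simp add: continuous_at_imp_continuous_on)

lemma F_mono: "a \<le> b \<Longrightarrow> F a \<le> F b"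
  using finite_borel_measure.cdf_nondecreasing[OF fbm] by blast

lemma Iic_eq: "measure \<mu> {..a} = F a"
  by (simp add: cdf_def)

lemma Ici_eq: "measure \<mu> {a..} = 1 - F a"
proof -
  have "{a..} = UNIV - {..<a}" by auto
  then have "measure \<mu> {a..} = 1 - measure \<mu> {..<a}"
    using prob_space.prob_compl[OF prob, of "{..<a}"] by simp
  moreover have "measure \<mu> {..a} = measure \<mu> {..<a} + measure \<mu> {a}"
  proof -
    have "{..a} = {..<a} \<union> {a}" by auto
    then show ?thesis using finite_measure.finite_measure_Union[OF fm, of "{..<a}" "{a}"] by simp
  qed
  ultimately show ?thesis using singleton0 Iic_eq by simp
qed

definition G :: "real \<Rightarrow> real \<Rightarrow> real" where
  "G y t = measure \<mu> {y - t..y + t}"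

lemma G_eq: "t \<ge> 0 \<Longrightarrow> G y t = F (y + t) - F (y - t)"
  unfolding G_def by (rule Icc_eq) simp

lemma G_mono: "0 \<le> t \<Longrightarrow> t \<le> t' \<Longrightarrow> G y t \<le> G y t'"
  unfolding G_def
  by (rule finite_measure.finite_measure_mono[OF fm]) auto

lemma G_le1: "G y t \<le> 1"
  unfolding G_def by (rule prob_space.prob_le_1[OF prob])

lemma G_nonneg: "G y t \<ge> 0"
  unfolding G_def by simp

lemma G_cont: "continuous_on {0..} (G y)"
proof -
  have "continuous_on {0..} (\<lambda>t. F (y + t) - F (y - t))"
  proof (intro continuous_at_imp_continuous_on ballI)
    fix t :: real
    have "isCont (\<lambda>t. F (y + t)) t" by (rule isCont_o2[OF _ F_cont]) (intro continuous_intros)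
    moreover have "isCont (\<lambda>t. F (y - t)) t" by (rule isCont_o2[OF _ F_cont]) (intro continuous_intros)
    ultimately show "isCont (\<lambda>t. F (y + t) - F (y - t)) t" by (rule isCont_diff)
  qed
  then show ?thesis
    by (rule continuous_on_eq) (auto simp: G_eq)
qed

lemma mu01: "measure \<mu> {0..1} = 1"
proof -
  have "AE x in \<mu>. x \<in> {0..1}" by (rule AE_01)
  then show ?thesis
    using prob_space.prob_eq_1[OF prob, of "{0..1}"] by simp
qed

lemma R_prop:
  assumes y: "y \<in> {0..1}"
  shows "R_rad \<mu> q y \<ge> 0" "G y (R_rad \<mu> q y) = q"
proof -
  define S where "S = {r. r \<ge> 0 \<and> measure \<mu> {y - r..y + r} = q}"
  have S2: "S = {r \<in> {0..}. G y r = q}" by (auto simp: S_def G_def)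
  have cl: "closed S" unfolding S2
    by (rule continuous_closed_preimage_constant[OF G_cont]) auto
  have bd: "bdd_below S" unfolding S_def by (auto intro: bdd_belowI[of _ 0])
  have ne: "S \<noteq> {}"
  proof -
    have "G y 0 \<le> q" using singleton0 q0 by (simp add: G_def)
    moreover have "q \<le> G y 1"
    proof -
      have "G y 1 \<ge> measure \<mu> {0..1}" unfolding G_def
        by (rule finite_measure.finite_measure_mono[OF fm]) (use y in auto)
      then show ?thesis using mu01 q1 by simp
    qed
    moreover have "continuous_on {0..1} (G y)"
      by (rule continuous_on_subset[OF G_cont]) auto
    ultimately obtain r where "0 \<le> r" "r \<le> 1" "G y r = q"
      using IVT'[of "G y" 0 q 1] by auto
    then show ?thesis unfolding S2 by auto
  qed
  have "Inf S \<in> S" by (rule closed_contains_Inf[OF ne bd cl])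
  then have "Inf S \<ge> 0 \<and> G y (Inf S) = q" unfolding S2 by simp
  moreover have "R_rad \<mu> q y = Inf S" by (simp add: R_rad_def S_def)
  ultimately show "R_rad \<mu> q y \<ge> 0" "G y (R_rad \<mu> q y) = q" by simp_all
qed

end

context dsetup begin

lemma peak: "\<forall>x\<in>{0..1}. x \<noteq> 1/2 \<longrightarrow> f x < f (1/2)"
  "mono_on {0..1/2} f" "antimono_on {1/2..1} f"
proof -
  obtain m where m: "m \<in> {0..1}" "mono_on {0..m} f" "antimono_on {m..1} f"
    "\<forall>x\<in>{0..1}. x \<noteq> m \<longrightarrow> f x < f m"
    using sp unfolding single_peaked_def by blast
  have "f m = f (1 - m)" using sym m(1) unfolding symmetric_density_def by (rule bspec)
  then have "f (1 - m) = f m" by simp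
  then have eq: "f (1 - m) = f m" .
  have "1 - m = m"
  proof (rule ccontr)
    assume "1 - m \<noteq> m"
    moreover have "1 - m \<in> {0..1}" using m(1) by auto
    ultimately have "f (1 - m) < f m" using m(4) by blast
    then show False using eq by simp
  qed
  then have "m = 1/2" by simp
  then show "\<forall>x\<in>{0..1}. x \<noteq> 1/2 \<longrightarrow> f x < f (1/2)"
    "mono_on {0..1/2} f" "antimono_on {1/2..1} f" using m(2-4) by (simp_all only: \<open>m = 1/2\<close>)
qed

lemma fhalf_pos: "f (1/2) > 0"
  using peak(1) nonneg by (metis atLeastAtMost_iff le_less_trans order_refl zero_le_one zero_neq_one)

lemma unimodal: assumes "x \<le> z" "x + z \<le> 1" shows "ft f x \<le> ft f z"
proof (cases "x < 0")
  case True then show ?thesis using ft_nonneg[of z] by (simp add: ft_def)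
next
  case False
  then have x0: "0 \<le> x" "x \<le> 1/2" "z \<le> 1" using assms by auto
  have fx: "ft f x = f x" using x0 by (simp add: ft_def)
  have fz: "ft f z = f z" using x0 assms by (simp add: ft_def)
  show ?thesis
  proof (cases "z \<le> 1/2")
    case True
    have "f x \<le> f z" by (rule mono_onD[OF peak(2)]) (use x0 assms(1) True in auto)
    then show ?thesis by (simp only: fx fz)
  next
    case False
    have e: "f z = f (1 - z)" by (rule bspec[OF sym[unfolded symmetric_density_def]]) (use x0 assms in auto)
    have "f x \<le> f (1 - z)" by (rule mono_onD[OF peak(2)]) (use x0 assms False in auto)
    then have "f x \<le> f z" using e by simp
    then show ?thesis by (simp only: fx fz)
  qed
qed

lemma shift_le:
  assumes "a \<le> b" "s \<ge> 0" "b + b + s \<le> 1"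
  shows "F b - F a \<le> F (b + s) - F (a + s)"
proof -
  have "emeasure \<mu> {a<..b} = (\<integral>\<^sup>+x. ennreal (ft f x) * indicator {a<..b} x \<partial>lborel)"
    by (rule emeasure_mu) simp
  also have "\<dots> \<le> (\<integral>\<^sup>+x. ennreal (ft f (s + 1 * x)) * indicator {a+s<..b+s} (s + 1 * x) \<partial>lborel)"
  proof (rule nn_integral_mono)
    fix x
    show "ennreal (ft f x) * indicator {a<..b} x \<le> ennreal (ft f (s + 1 * x)) * indicator {a+s<..b+s} (s + 1 * x)"
    proof (cases "x \<in> {a<..b}")
      case True
      then have "ft f x \<le> ft f (s + x)" using assms by (intro unimodal) auto
      then show ?thesis using True by (auto simp: indicator_def intro: ennreal_leI)
    qed simp
  qed
  also have "\<dots> = ennreal \<bar>1\<bar> * (\<integral>\<^sup>+x. ennreal (ft f (s + 1 * x)) * indicator {a+s<..b+s} (s + 1 * x) \<partial>lborel)"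
    by simp
  also have "\<dots> = (\<integral>\<^sup>+x. ennreal (ft f x) * indicator {a+s<..b+s} x \<partial>lborel)"
    by (rule nn_integral_real_affine[symmetric, where c=1 and t=s and f="\<lambda>x. ennreal (ft f x) * indicator {a+s<..b+s} x"]) auto
  also have "\<dots> = emeasure \<mu> {a+s<..b+s}"
    by (rule emeasure_mu[symmetric]) simp
  finally have "measure \<mu> {a<..b} \<le> measure \<mu> {a+s<..b+s}"
    by (simp add: finite_measure.emeasure_eq_measure[OF fm])
  then show ?thesis using Ioc_eq assms by simp
qed

lemma G_refl: "t \<ge> 0 \<Longrightarrow> G (1 - y) t = G y t"
proof -
  assume t: "t \<ge> 0"
  have "G y t = measure \<mu> ((\<lambda>x. 1 - x) -` {y - t..y + t})"
    unfolding G_def by (rule reflect) simp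
  also have "(\<lambda>x. 1 - x) -` {y - t..y + t} = {1 - y - t..1 - y + t}" by auto
  finally show ?thesis by (simp add: G_def)
qed

lemma anderson_aux: "y \<le> 1/2 \<Longrightarrow> t \<ge> 0 \<Longrightarrow> G y t \<le> G (1/2) t"
proof -
  assume y: "y \<le> 1/2" and t: "t \<ge> 0"
  have "F (1/2 - t) - F (y - t) \<le> F (1/2 - t + 2*t) - F (y - t + 2*t)"
    using y t by (intro shift_le) auto
  then show ?thesis using t by (simp add: G_eq algebra_simps)
qed

lemma anderson: "t \<ge> 0 \<Longrightarrow> G y t \<le> G (1/2) t"
proof (cases "y \<le> 1/2")
  case False
  assume t: "t \<ge> 0"
  have "G y t = G (1 - y) t" using G_refl[OF t, of y] by simp
  also have "\<dots> \<le> G (1/2) t" using False t by (intro anderson_aux) auto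
  finally show ?thesis .
qed (rule anderson_aux)

lemma middle_pos: assumes "d > 0" shows "F (1/2 + d) - F (1/2 - d) > 0"
proof -
  obtain e where e: "e > 0" "\<forall>x'\<in>{0..1}. dist x' (1/2) < e \<longrightarrow> dist (f x') (f (1/2)) < f (1/2) / 2"
  proof -
    have h: "(1/2::real) \<in> {0..1}" by simp
    have hp: "f (1/2) / 2 > 0" using fhalf_pos by simp
    have "\<forall>\<epsilon>>0. \<exists>\<delta>>0. \<forall>x'\<in>{0..1}. dist x' (1/2) < \<delta> \<longrightarrow> dist (f x') (f (1/2)) < \<epsilon>"
      using cont h unfolding continuous_on_iff by (rule bspec)
    then have "\<exists>\<delta>>0. \<forall>x'\<in>{0..1}. dist x' (1/2) < \<delta> \<longrightarrow> dist (f x') (f (1/2)) < f (1/2) / 2"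
      using hp by blast
    then show ?thesis using that by blast
  qed
  define r where "r = min (min d e) (1/2)"
  have r: "r > 0" "r \<le> d" "r < e + 1" "r \<le> 1/2" using e assms by (auto simp: r_def)
  have ci: "(\<integral>\<^sup>+x. ennreal (f (1/2) / 2) * indicator {1/2 - r/2<..1/2} x \<partial>lborel) = ennreal (f (1/2) / 2) * emeasure lborel {1/2 - r/2<..1/2}"
    by (rule nn_integral_cmult_indicator) simp
  have "(\<integral>\<^sup>+x. ennreal (f (1/2) / 2) * indicator {1/2 - r/2<..1/2} x \<partial>lborel) \<le>
      (\<integral>\<^sup>+x. ennreal (ft f x) * indicator {1/2 - d<..1/2 + d} x \<partial>lborel)"
  proof (rule nn_integral_mono)
    fix x
    show "ennreal (f (1/2) / 2) * indicator {1/2 - r/2<..1/2} x \<le> ennreal (ft f x) * indicator {1/2 - d<..1/2 + d} x"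
    proof (cases "x \<in> {1/2 - r/2<..1/2}")
      case True
      then have x: "x \<in> {0..1}" "dist x (1/2) < e" using r by (auto simp: dist_real_def r_def)
      then have "dist (f x) (f (1/2)) < f (1/2) / 2" using e(2) by blast
      then have "f (1/2) / 2 \<le> f x" unfolding dist_real_def by linarith
      moreover have "x \<in> {1/2 - d<..1/2 + d}" using True r by auto
      ultimately show ?thesis using x by (auto simp: indicator_def ft_def intro!: ennreal_leI)
    qed simp
  qed
  also have "\<dots> = emeasure \<mu> {1/2 - d<..1/2 + d}" by (rule emeasure_mu[symmetric]) simp
  finally have "ennreal (f (1/2) / 2) * ennreal (r/2) \<le> emeasure \<mu> {1/2 - d<..1/2 + d}"
    using r unfolding ci by simp
  moreover have e1: "emeasure \<mu> {1/2 - d<..1/2 + d} = ennreal (measure \<mu> {1/2 - d<..1/2 + d})"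
    by (rule finite_measure.emeasure_eq_measure[OF fm])
  moreover have e2: "ennreal (f (1/2) / 2) * ennreal (r/2) = ennreal (f (1/2) / 2 * (r/2))"
    by (rule ennreal_mult[symmetric]) (use fhalf_pos r in auto)
  ultimately have "ennreal (f (1/2) / 2 * (r/2)) \<le> ennreal (measure \<mu> {1/2 - d<..1/2 + d})"
    by simp
  then have "f (1/2) / 2 * (r/2) \<le> measure \<mu> {1/2 - d<..1/2 + d}"
    by (subst (asm) ennreal_le_iff) auto
  moreover have "f (1/2) / 2 * (r/2) > 0" using fhalf_pos r by simp
  ultimately show ?thesis using Ioc_eq[of "1/2 - d" "1/2 + d"] assms by simp
qed

lemma F_sum: "F (1/2 - d) + F (1/2 + d) = 1"
proof -
  have "F (1/2 - d) = measure \<mu> {..1/2 - d}" by (rule Iic_eq[symmetric])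
  also have "\<dots> = measure \<mu> ((\<lambda>x. 1 - x) -` {..1/2 - d})" by (rule reflect) simp
  also have "(\<lambda>x. 1 - x) -` {..1/2 - d} = {1/2 + d..}" by auto
  also have "measure \<mu> {1/2 + d..} = 1 - F (1/2 + d)" by (rule Ici_eq)
  finally show ?thesis by simp
qed

lemma median_lo: assumes "d > 0" shows "F (1/2 - d) < 1/2"
proof -
  have "F (1/2 + d) - F (1/2 - d) > 0" by (rule middle_pos[OF assms])
  moreover have "F (1/2 - d) + F (1/2 + d) = 1" by (rule F_sum)
  ultimately show ?thesis by linarith
qed

lemma median_hi: assumes "d > 0" shows "F (1/2 + d) > 1/2"
proof -
  have "F (1/2 + d) - F (1/2 - d) > 0" by (rule middle_pos[OF assms])
  moreover have "F (1/2 - d) + F (1/2 + d) = 1" by (rule F_sum)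
  ultimately show ?thesis by linarith
qed

end

lemma length_filter_sort: "length (filter P (sort xs)) = length (filter P xs)"
  by (metis mset_filter mset_sort size_mset)

lemma sort_count:
  fixes g :: "nat \<Rightarrow> real"
  assumes j: "j < n"
  shows "sort (map g [0..<n]) ! j \<le> t \<longleftrightarrow> j < card {i. i < n \<and> g i \<le> t}"
proof -
  define s where "s = sort (map g [0..<n])"
  have ls: "length s = n" by (simp add: s_def)
  have srt: "sorted s" by (simp add: s_def)
  have e1: "{i. i < n \<and> map g [0..<n] ! i \<le> t} = {i. i < n \<and> g i \<le> t}" by auto
  have "card {i. i < n \<and> g i \<le> t} = length (filter (\<lambda>v. v \<le> t) (map g [0..<n]))"
    by (simp add: length_filter_conv_card e1)
  also have "\<dots> = length (filter (\<lambda>v. v \<le> t) s)" by (simp add: s_def length_filter_sort)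
  also have "\<dots> = card {i. i < n \<and> s ! i \<le> t}" by (simp add: length_filter_conv_card ls)
  finally have C: "card {i. i < n \<and> g i \<le> t} = card {i. i < n \<and> s ! i \<le> t}" .
  define D where "D = {i. i < n \<and> s ! i \<le> t}"
  have finD: "finite D" by (simp add: D_def)
  have "s ! j \<le> t \<longleftrightarrow> j < card D"
  proof
    assume a: "s ! j \<le> t"
    have "{..j} \<subseteq> D"
    proof
      fix i assume "i \<in> {..j}"
      then have "i \<le> j" by simp
      then have "s ! i \<le> s ! j" using srt j ls by (intro sorted_nth_mono) auto
      then show "i \<in> D" using a \<open>i \<le> j\<close> j by (auto simp: D_def)
    qed
    then have "card {..j} \<le> card D" using finD by (rule card_mono[rotated])
    then show "j < card D" by simp
  next
    assume a: "j < card D"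
    show "s ! j \<le> t"
    proof (rule ccontr)
      assume na: "\<not> s ! j \<le> t"
      have "D \<subseteq> {..<j}"
      proof
        fix i assume i: "i \<in> D"
        show "i \<in> {..<j}"
        proof (rule ccontr)
          assume "i \<notin> {..<j}"
          then have "j \<le> i" by simp
          then have "s ! j \<le> s ! i" using srt i ls by (intro sorted_nth_mono) (auto simp: D_def)
          then show False using i na by (auto simp: D_def)
        qed
      qed
      then have "card D \<le> j" using card_mono[of "{..<j}" D] by simp
      then show False using a by simp
    qed
  qed
  then show ?thesis using C by (simp add: s_def D_def)
qed

lemma sort_lip:
  fixes g g' :: "nat \<Rightarrow> real"
  assumes j: "j < n" and c: "\<And>i. i < n \<Longrightarrow> \<bar>g i - g' i\<bar> \<le> c"
  shows "sort (map g [0..<n]) ! j \<le> sort (map g' [0..<n]) ! j + c"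
proof -
  define v where "v = sort (map g' [0..<n]) ! j"
  have "j < card {i. i < n \<and> g' i \<le> v}" using sort_count[OF j, of g' v] by (simp add: v_def)
  also have "\<dots> \<le> card {i. i < n \<and> g i \<le> v + c}"
  proof (rule card_mono)
    show "{i. i < n \<and> g' i \<le> v} \<subseteq> {i. i < n \<and> g i \<le> v + c}"
    proof
      fix i assume i: "i \<in> {i. i < n \<and> g' i \<le> v}"
      then have "\<bar>g i - g' i\<bar> \<le> c" using c by simp
      then show "i \<in> {i. i < n \<and> g i \<le> v + c}" using i by (auto simp: abs_le_iff)
    qed
  qed simp
  finally show ?thesis using sort_count[OF j, of g "v + c"] by (simp add: v_def)
qed

lemma sort_lip_abs:
  fixes g g' :: "nat \<Rightarrow> real"
  assumes j: "j < n" and c: "\<And>i. i < n \<Longrightarrow> \<bar>g i - g' i\<bar> \<le> c"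
  shows "\<bar>sort (map g [0..<n]) ! j - sort (map g' [0..<n]) ! j\<bar> \<le> c"
  using sort_lip[OF j c] sort_lip[OF j, of g' g c] c by (force simp: abs_le_iff abs_minus_commute)

lemma sort_mem:
  fixes g :: "nat \<Rightarrow> real"
  assumes "j < n"
  shows "\<exists>i<n. sort (map g [0..<n]) ! j = g i"
proof -
  have "sort (map g [0..<n]) ! j \<in> set (sort (map g [0..<n]))" using assms by (intro nth_mem) simp
  then show ?thesis by auto
qed

definition cg :: "nat \<Rightarrow> real \<Rightarrow> real" where
  "cg m d = (\<Sum>l<m. if real l / real m < d then 1 else 0) / real m"

lemma cg_bounds:
  assumes m: "m \<ge> 1" and d: "0 \<le> d" "d \<le> 1"
  shows "d \<le> cg m d" "cg m d \<le> d + 1 / real m"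
proof -
  define K where "K = nat \<lceil>d * real m\<rceil>"
  have mpos: "real m > 0" using m by simp
  have dm: "d * real m \<ge> 0" using d mpos by simp
  have cpos: "\<lceil>d * real m\<rceil> \<ge> 0" using dm by simp
  have Kr: "real K = of_int \<lceil>d * real m\<rceil>" unfolding K_def using cpos by simp
  have KI: "int K = \<lceil>d * real m\<rceil>" unfolding K_def using cpos by simp
  have "{l. l < m \<and> real l / real m < d} = {..<K}"
  proof -
    have e1: "real l / real m < d \<longleftrightarrow> real l < d * real m" for l
      using mpos by (simp add: pos_divide_less_eq)
    have e2: "real l < d * real m \<longleftrightarrow> l < K" for l
    proof -
      have "l < K \<longleftrightarrow> int l < \<lceil>d * real m\<rceil>" using KI by linarith
      also have "\<dots> \<longleftrightarrow> real_of_int (int l) < d * real m" by (rule less_ceiling_iff)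
      finally show ?thesis by simp
    qed
    have Km: "K \<le> m"
    proof -
      have "d * real m \<le> real m" using d mpos by simp
      then have "\<lceil>d * real m\<rceil> \<le> int m" by (simp add: ceiling_le_iff)
      then show ?thesis using KI by linarith
    qed
    show ?thesis
    proof (rule set_eqI)
      fix l
      show "l \<in> {l. l < m \<and> real l / real m < d} \<longleftrightarrow> l \<in> {..<K}"
        using e1[of l] e2[of l] Km by auto
    qed
  qed
  then have "(\<Sum>l<m. if real l / real m < d then 1 else 0 :: real) = real K"
    by (simp add: sum.If_cases Int_def)
  then have cgK: "cg m d = real K / real m" by (simp add: cg_def)
  have K1: "d * real m \<le> real K" unfolding Kr by (rule le_of_int_ceiling)
  have K2: "real K < d * real m + 1" unfolding Kr using ceiling_correct[of "d * real m"] by linarith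
  show "d \<le> cg m d" using K1 mpos by (simp add: cgK pos_le_divide_eq)
  show "cg m d \<le> d + 1 / real m" using K2 mpos by (simp add: cgK divide_simps)
qed

context dsetup begin

lemma intind: "A \<in> sets borel \<Longrightarrow> integrable \<mu> (indicator A :: real \<Rightarrow> real)"
  by (rule integrable_real_indicator) (use finite_measure.emeasure_finite[OF fm, of A] in \<open>simp_all add: less_top\<close>)

definition V :: "real \<Rightarrow> nat \<Rightarrow> real" where
  "V y m = (\<Sum>l<m. (q - min q (G y (real l / real m)))) / real m"

lemma shell:
  assumes y: "y \<in> {0..1}" and t: "t \<ge> 0"
  shows "measure \<mu> ({y - R_rad \<mu> q y..y + R_rad \<mu> q y} \<inter> {x. t < \<bar>x - y\<bar>}) = q - min q (G y t)"
proof -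
  define R where "R = R_rad \<mu> q y"
  have R: "R \<ge> 0" "G y R = q" using R_prop[OF y] by (auto simp: R_def)
  show ?thesis
  proof (cases "t < R")
    case True
    have eq: "{y - R..y + R} \<inter> {x. t < \<bar>x - y\<bar>} = {y - R..y + R} - {y - t..y + t}"
      using True by auto
    have "measure \<mu> ({y - R..y + R} - {y - t..y + t}) = measure \<mu> {y - R..y + R} - measure \<mu> {y - t..y + t}"
      by (rule finite_measure.finite_measure_Diff[OF fm]) (use True in auto)
    moreover have "G y t \<le> q" using G_mono[OF t, of R y] True R by simp
    ultimately show ?thesis using R unfolding R_def[symmetric] eq by (simp add: G_def)
  next
    case False
    have eq: "{y - R..y + R} \<inter> {x. t < \<bar>x - y\<bar>} = {}" using False by auto
    have "G y t \<ge> q" using G_mono[OF R(1), of t y] False R by simp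
    then show ?thesis unfolding R_def[symmetric] eq by simp
  qed
qed

lemma W_bounds:
  assumes y: "y \<in> {0..1}" and m: "m \<ge> 1"
  shows "W_cost \<mu> q y \<le> V y m" "V y m \<le> W_cost \<mu> q y + q / real m"
proof -
  define R where "R = R_rad \<mu> q y"
  define B where "B = {y - R..y + R}"
  define Sh where "Sh l = B \<inter> {x. real l / real m < \<bar>x - y\<bar>}" for l
  have R: "R \<ge> 0" "G y R = q" using R_prop[OF y] by (auto simp: R_def)
  have mB: "measure \<mu> B = q" using R by (simp add: B_def G_def)
  have mpos: "real m > 0" using m by simp
  have W: "W_cost \<mu> q y = (\<integral>x. indicator B x * \<bar>x - y\<bar> \<partial>\<mu>)"
    by (simp add: W_cost_def set_lebesgue_integral_def B_def R_def)
  have Sh_sets[measurable]: "Sh l \<in> sets borel" for l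
    unfolding Sh_def B_def by measurable
  have B_sets[measurable]: "B \<in> sets borel" unfolding B_def by simp
  have intS: "(\<integral>x. (\<Sum>l<m. indicator (Sh l) x) / real m \<partial>\<mu>) = V y m"
  proof -
    have "(\<integral>x. (\<Sum>l<m. indicator (Sh l) x) / real m \<partial>\<mu>) = (\<integral>x. (\<Sum>l<m. indicator (Sh l) x) \<partial>\<mu>) / real m"
      by (rule integral_divide_zero)
    also have "(\<integral>x. (\<Sum>l<m. indicator (Sh l) x :: real) \<partial>\<mu>) = (\<Sum>l<m. \<integral>x. indicator (Sh l) x \<partial>\<mu>)"
      by (rule Bochner_Integration.integral_sum) (auto intro!: intind)
    also have "\<dots> = (\<Sum>l<m. q - min q (G y (real l / real m)))"
    proof (rule sum.cong)
      fix l assume "l \<in> {..<m}"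
      have "(\<integral>x. indicator (Sh l) x \<partial>\<mu>) = measure \<mu> (Sh l)" by simp
      also have "\<dots> = q - min q (G y (real l / real m))"
        unfolding Sh_def B_def R_def by (rule shell[OF y]) simp
      finally show "(\<integral>x. indicator (Sh l) x \<partial>\<mu>) = q - min q (G y (real l / real m))" .
    qed simp
    finally show ?thesis by (simp add: V_def)
  qed
  have pw: "(\<Sum>l<m. indicator (Sh l) x) / real m = indicator B x * cg m \<bar>x - y\<bar>" for x
  proof (cases "x \<in> B")
    case True
    have "(\<Sum>l<m. indicator (Sh l) x) = (\<Sum>l<m. if real l / real m < \<bar>x - y\<bar> then 1 else 0 :: real)"
      by (rule sum.cong) (use True in \<open>auto simp: Sh_def indicator_def\<close>)
    then show ?thesis using True by (simp add: cg_def)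
  next
    case False
    then show ?thesis by (simp add: Sh_def indicator_def)
  qed
  have ptw1: "indicator B x * \<bar>x - y\<bar> \<le> (\<Sum>l<m. indicator (Sh l) x) / real m"
    and ptw2: "(\<Sum>l<m. indicator (Sh l) x) / real m \<le> indicator B x * \<bar>x - y\<bar> + indicator B x / real m"
    if x: "x \<in> {0..1}" for x
  proof -
    have d: "0 \<le> \<bar>x - y\<bar>" "\<bar>x - y\<bar> \<le> 1" using x y by auto
    show "indicator B x * \<bar>x - y\<bar> \<le> (\<Sum>l<m. indicator (Sh l) x) / real m"
      unfolding pw using cg_bounds(1)[OF m d] by (simp add: indicator_def)
    show "(\<Sum>l<m. indicator (Sh l) x) / real m \<le> indicator B x * \<bar>x - y\<bar> + indicator B x / real m"
      unfolding pw using cg_bounds(2)[OF m d] by (simp add: indicator_def)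
  qed
  have AEx: "AE x in \<mu>. x \<in> {0..1}" by (rule AE_01)
  have int1: "integrable \<mu> (\<lambda>x. indicator B x * \<bar>x - y\<bar>)"
  proof (rule finite_measure.integrable_const_bound[OF fm, where B=2])
    show "AE x in \<mu>. norm (indicator B x * \<bar>x - y\<bar>) \<le> 2"
      using AEx by eventually_elim (use y in \<open>auto simp: indicator_def\<close>)
  qed measurable
  have int2: "integrable \<mu> (\<lambda>x. (\<Sum>l<m. indicator (Sh l) x) / real m)"
    by (intro integrable_divide Bochner_Integration.integrable_sum intind) auto
  have int3: "integrable \<mu> (\<lambda>x. indicator B x / real m)"
    by (intro integrable_divide intind) auto
  have ae1: "AE x in \<mu>. indicator B x * \<bar>x - y\<bar> \<le> (\<Sum>l<m. indicator (Sh l) x) / real m"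
    using AEx by eventually_elim (rule ptw1)
  have ae2: "AE x in \<mu>. (\<Sum>l<m. indicator (Sh l) x) / real m \<le> indicator B x * \<bar>x - y\<bar> + indicator B x / real m"
    using AEx by eventually_elim (rule ptw2)
  have "W_cost \<mu> q y \<le> (\<integral>x. (\<Sum>l<m. indicator (Sh l) x) / real m \<partial>\<mu>)"
    unfolding W by (rule integral_mono_AE[OF int1 int2 ae1])
  then show "W_cost \<mu> q y \<le> V y m" using intS by simp
  have "(\<integral>x. (\<Sum>l<m. indicator (Sh l) x) / real m \<partial>\<mu>) \<le> (\<integral>x. indicator B x * \<bar>x - y\<bar> + indicator B x / real m \<partial>\<mu>)"
    by (rule integral_mono_AE[OF int2 Bochner_Integration.integrable_add[OF int1 int3] ae2])
  also have "\<dots> = W_cost \<mu> q y + q / real m"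
    unfolding W using int1 int3 mB by (simp add: Bochner_Integration.integral_add integral_divide_zero)
  finally show "V y m \<le> W_cost \<mu> q y + q / real m" using intS by simp
qed

lemma W_opt: assumes y: "y \<in> {0..1}" shows "W_cost \<mu> q (1/2) \<le> W_cost \<mu> q y"
proof (rule ccontr)
  assume "\<not> ?thesis"
  then have gap: "W_cost \<mu> q (1/2) - W_cost \<mu> q y > 0" by simp
  obtain m :: nat where m: "real m > q / (W_cost \<mu> q (1/2) - W_cost \<mu> q y)"
    using reals_Archimedean2 by blast
  have m1: "m \<ge> 1"
  proof -
    have "q / (W_cost \<mu> q (1/2) - W_cost \<mu> q y) > 0" using gap q0 by simp
    then show ?thesis using m by (cases m) auto
  qed
  have Vle: "V (1/2) m \<le> V y m"
  proof -
    have "(\<Sum>l<m. (q - min q (G (1/2) (real l / real m)))) \<le> (\<Sum>l<m. (q - min q (G y (real l / real m))))"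
    proof (rule sum_mono)
      fix l assume "l \<in> {..<m}"
      have "G y (real l / real m) \<le> G (1/2) (real l / real m)" by (rule anderson) simp
      then show "q - min q (G (1/2) (real l / real m)) \<le> q - min q (G y (real l / real m))"
        by (simp add: min_def)
    qed
    then show ?thesis unfolding V_def by (simp add: divide_right_mono)
  qed
  have "W_cost \<mu> q (1/2) \<le> V (1/2) m" using W_bounds(1)[of "1/2" m] m1 by simp
  also have "\<dots> \<le> V y m" by (rule Vle)
  also have "\<dots> \<le> W_cost \<mu> q y + q / real m" using W_bounds(2)[OF y m1] .
  finally have "W_cost \<mu> q (1/2) - W_cost \<mu> q y \<le> q / real m" by simp
  moreover have "q / real m < W_cost \<mu> q (1/2) - W_cost \<mu> q y"
    using m gap m1 by (simp add: divide_less_eq mult.commute)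
  ultimately show False by simp
qed

end

lemma coords_indep:
  fixes n :: nat
  assumes M: "prob_space M" and n: "n \<ge> 1"
  shows "prob_space.indep_vars (PiM {..<n} (\<lambda>_. M)) (\<lambda>_. M) (\<lambda>i X. X i) {..<n}"
proof -
  let ?P = "PiM {..<n} (\<lambda>_. M)"
  interpret P: prob_space ?P by (rule prob_space_PiM) (use M in auto)
  have ne: "{..<n} \<noteq> {}" using n by (simp add: lessThan_empty_iff)
  show ?thesis
  proof (subst P.indep_vars_iff_distr_eq_PiM'[OF ne])
    show "(\<lambda>X. X i) \<in> measurable ?P M" if "i \<in> {..<n}" for i
      by (rule measurable_component_singleton) (use that in simp)
    have "distr ?P ?P (\<lambda>x. restrict x {..<n}) = distr ?P ?P (\<lambda>x. x)"
      by (rule distr_cong) (auto simp: space_PiM)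
    also have "\<dots> = ?P" by simp
    also have "?P = PiM {..<n} (\<lambda>i. distr ?P M (\<lambda>X. X i))"
    proof (rule PiM_cong)
      fix i assume "i \<in> {..<n}"
      then show "M = distr ?P M (\<lambda>X. X i)" using M by (intro distr_PiM_component[symmetric]) auto
    qed simp
    finally show "distr ?P (PiM {..<n} (\<lambda>_. M)) (\<lambda>x. \<lambda>i\<in>{..<n}. x i) = PiM {..<n} (\<lambda>i. distr ?P M (\<lambda>X. X i))" .
  qed
qed

lemma hoeff_count:
  assumes M: "prob_space M" "sets M = sets borel" and A: "A \<in> sets borel" and n: "n \<ge> 1" and g: "\<gamma> > 0"
  shows "measure (PiM {..<n} (\<lambda>_. M)) {X \<in> space (PiM {..<n} (\<lambda>_. M)).
            \<gamma> \<le> \<bar>(\<Sum>i<n. indicator A (X i)) / real n - measure M A\<bar>} \<le> 2 * exp (-2 * \<gamma>\<^sup>2) ^ n"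
proof -
  let ?P = "PiM {..<n} (\<lambda>_. M)"
  interpret P: prob_space ?P by (rule prob_space_PiM) (use M in auto)
  have Ameas: "indicator A \<in> borel_measurable M"
    using A M(2) by (simp add: measurable_cong_sets[OF M(2) refl])
  have ind: "P.indep_vars (\<lambda>_. borel) (\<lambda>i X. indicator A (X i) :: real) {..<n}"
    by (rule P.indep_vars_compose2[OF coords_indep[OF M(1) n]]) (rule Ameas)
  have spM: "space M = UNIV" using sets_eq_imp_space_eq[OF M(2)] by simp
  have Ex: "P.expectation (\<lambda>X. indicator A (X i)) = measure M A" if i: "i < n" for i
  proof -
    have "integral\<^sup>L (distr ?P M (\<lambda>X. X i)) (indicator A :: _ \<Rightarrow> real) = integral\<^sup>L ?P (\<lambda>X. indicator A (X i) :: real)"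
      by (rule integral_distr) (use i Ameas in auto)
    also have "distr ?P M (\<lambda>X. X i) = M" using i M by (intro distr_PiM_component) auto
    finally show ?thesis using M spM by simp
  qed
  define mu :: real where "mu = (\<Sum>i\<in>{..<n}. P.expectation (\<lambda>X. indicator A (X i)))"
  have "(\<Sum>i\<in>{..<n}. P.expectation (\<lambda>X. indicator A (X i))) = (\<Sum>i\<in>{..<n}. measure M A)"
    by (rule sum.cong) (simp_all add: Ex)
  then have mu: "mu = real n * measure M A" unfolding mu_def by simp
  have AE01: "AE x in ?P. indicator A (x i) \<in> {0..(1::real)}" for i
    by (rule AE_I2) (simp add: indicator_def)
  interpret H: Hoeffding_ineq ?P "{..<n}" "\<lambda>i X. indicator A (X i)" "\<lambda>_. 0" "\<lambda>_. 1" mu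
  proof unfold_locales
    show "finite {..<n}" by simp
    show "P.indep_vars (\<lambda>_. borel) (\<lambda>i X. indicator A (X i) :: real) {..<n}" by (rule ind)
    show "AE x in ?P. indicator A (x i) \<in> {0..(1::real)}" if "i \<in> {..<n}" for i by (rule AE01)
  qed (simp add: mu_def)
  have "P.prob {X \<in> space ?P. \<bar>(\<Sum>i\<in>{..<n}. indicator A (X i)) - mu\<bar> \<ge> real n * \<gamma>}
      \<le> 2 * exp (-2 * (real n * \<gamma>)\<^sup>2 / (\<Sum>i\<in>{..<n}. (1 - 0)\<^sup>2))"
  proof (rule H.Hoeffding_ineq_abs_ge)
    show "0 \<le> real n * \<gamma>" using g by simp
    show "0 < (\<Sum>i\<in>{..<n}. ((1::real) - 0)\<^sup>2)" using n by simp
  qed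
  also have "-2 * (real n * \<gamma>)\<^sup>2 / (\<Sum>i\<in>{..<n}. (1 - 0)\<^sup>2) = real n * (-2 * \<gamma>\<^sup>2)"
    using n by (simp add: power2_eq_square)
  also have "exp (real n * (-2 * \<gamma>\<^sup>2)) = exp (-2 * \<gamma>\<^sup>2) ^ n" by (rule exp_of_nat_mult)
  also have "{X \<in> space ?P. \<bar>(\<Sum>i\<in>{..<n}. indicator A (X i)) - mu\<bar> \<ge> real n * \<gamma>}
      = {X \<in> space ?P. \<gamma> \<le> \<bar>(\<Sum>i<n. indicator A (X i)) / real n - measure M A\<bar>}"
  proof -
    have "\<bar>s - real n * p\<bar> \<ge> real n * \<gamma> \<longleftrightarrow> \<gamma> \<le> \<bar>s / real n - p\<bar>" for s p :: real
    proof -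
      have np: "real n > 0" using n by simp
      have "s - real n * p = real n * (s / real n - p)" using np by (simp add: field_simps)
      then have "\<bar>s - real n * p\<bar> = real n * \<bar>s / real n - p\<bar>" using np by (simp add: abs_mult)
      then show ?thesis using np by simp
    qed
    then show ?thesis unfolding mu by simp
  qed
  finally show ?thesis .
qed

lemma lln:
  assumes M: "prob_space M" "sets M = sets borel" and A: "A \<in> sets borel" and g: "\<gamma> > 0"
  shows "(\<lambda>n. measure (PiM {..<n} (\<lambda>_. M)) {X \<in> space (PiM {..<n} (\<lambda>_. M)).
            \<gamma> \<le> \<bar>(\<Sum>i<n. indicator A (X i)) / real n - measure M A\<bar>}) \<longlonglongrightarrow> 0"
proof (rule tendsto_sandwich[where f="\<lambda>_. 0" and h="\<lambda>n. 2 * exp (-2 * \<gamma>\<^sup>2) ^ n"])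
  show "\<forall>\<^sub>F n in sequentially. 0 \<le> measure (PiM {..<n} (\<lambda>_. M)) {X \<in> space (PiM {..<n} (\<lambda>_. M)).
            \<gamma> \<le> \<bar>(\<Sum>i<n. indicator A (X i)) / real n - measure M A\<bar>}" by simp
  show "\<forall>\<^sub>F n in sequentially. measure (PiM {..<n} (\<lambda>_. M)) {X \<in> space (PiM {..<n} (\<lambda>_. M)).
            \<gamma> \<le> \<bar>(\<Sum>i<n. indicator A (X i)) / real n - measure M A\<bar>} \<le> 2 * exp (-2 * \<gamma>\<^sup>2) ^ n"
    using eventually_ge_at_top[of 1] by eventually_elim (rule hoeff_count[OF M A _ g])
  show "(\<lambda>n. 0) \<longlonglongrightarrow> (0::real)" by simp
  have "exp (-2 * \<gamma>\<^sup>2) < 1" using g by simp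
  then have "(\<lambda>n. exp (-2 * \<gamma>\<^sup>2) ^ n) \<longlonglongrightarrow> 0" by (intro LIMSEQ_power_zero) simp
  then show "(\<lambda>n. 2 * exp (-2 * \<gamma>\<^sup>2) ^ n) \<longlonglongrightarrow> 0" by (intro tendsto_mult_right_zero)
qed

lemma sum_if_card: "(\<Sum>i<(n::nat). if P i then 1 else 0 :: real) = real (card {i. i < n \<and> P i})"
proof -
  have "(\<Sum>i<n. if P i then 1 else 0 :: real) = (\<Sum>i\<in>{i \<in> {..<n}. P i}. 1)"
    by (rule sum.inter_filter[symmetric]) simp
  also have "{i \<in> {..<n}. P i} = {i. i < n \<and> P i}" by auto
  finally show ?thesis by simp
qed

lemma inner_count:
  fixes d :: "nat \<Rightarrow> real"
  assumes k: "k \<le> n"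
  shows "(\<Sum>j<k. if t < sort (map d [0..<n]) ! j then 1 else 0 :: real)
       = real k - real (min k (card {i. i < n \<and> d i \<le> t}))"
proof -
  define s where "s = sort (map d [0..<n])"
  define C where "C = card {i. i < n \<and> d i \<le> t}"
  have "(\<Sum>j<k. if t < s ! j then 1 else 0 :: real) = (\<Sum>j<k. 1 - (if s ! j \<le> t then 1 else 0))"
    by (rule sum.cong) auto
  also have "\<dots> = real k - (\<Sum>j<k. if s ! j \<le> t then 1 else 0)"
    by (simp add: sum_subtractf)
  also have "(\<Sum>j<k. if s ! j \<le> t then 1 else 0 :: real) = real (card {j. j < k \<and> s ! j \<le> t})"
    by (rule sum_if_card)
  also have "{j. j < k \<and> s ! j \<le> t} = {..<min k C}"
  proof (rule set_eqI)
    fix j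
    show "j \<in> {j. j < k \<and> s ! j \<le> t} \<longleftrightarrow> j \<in> {..<min k C}"
    proof (cases "j < k")
      case True
      then have "j < n" using k by simp
      then have "s ! j \<le> t \<longleftrightarrow> j < C" unfolding s_def C_def by (rule sort_count)
      then show ?thesis using True by auto
    qed auto
  qed
  finally show ?thesis by (simp add: s_def C_def)
qed

lemma sum_sorted_grid:
  fixes d :: "nat \<Rightarrow> real"
  assumes k: "k \<le> n"
  shows "(\<Sum>j<k. cg m (sort (map d [0..<n]) ! j))
       = (\<Sum>l<m. (real k - real (min k (card {i. i < n \<and> d i \<le> real l / real m})))) / real m"
proof -
  define s where "s = sort (map d [0..<n])"
  have "(\<Sum>j<k. cg m (s ! j)) = (\<Sum>j<k. \<Sum>l<m. if real l / real m < s ! j then 1 else 0) / real m"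
    by (simp add: cg_def sum_divide_distrib)
  also have "(\<Sum>j<k. \<Sum>l<m. if real l / real m < s ! j then 1 else 0 :: real)
       = (\<Sum>l<m. \<Sum>j<k. if real l / real m < s ! j then 1 else 0)"
    by (rule sum.swap)
  also have "\<dots> = (\<Sum>l<m. (real k - real (min k (card {i. i < n \<and> d i \<le> real l / real m}))))"
    by (rule sum.cong) (use inner_count[OF k] in \<open>simp_all add: s_def\<close>)
  finally show ?thesis by (simp add: s_def)
qed

lemma sum_ind_card:
  "(\<Sum>i<(n::nat). indicator A (X i) :: real) = real (card {i. i < n \<and> X i \<in> A})"
proof -
  have "(\<Sum>i<n. indicator A (X i) :: real) = (\<Sum>i<n. if X i \<in> A then 1 else 0)"
    by (rule sum.cong) (auto simp: indicator_def)
  also have "\<dots> = real (card {i. i < n \<and> X i \<in> A})" by (rule sum_if_card)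
  finally show ?thesis .
qed

lemma k_le: assumes "0 < q" "q < 1" shows "nat \<lfloor>q * real n\<rfloor> \<le> n"
proof -
  have "q * real n \<le> real n" using assms by (simp add: mult_left_le_one_le)
  then have "\<lfloor>q * real n\<rfloor> \<le> int n" by (simp add: floor_le_iff)
  then show ?thesis by simp
qed

lemma SW_lip:
  assumes n: "n \<ge> 1" and k: "nat \<lfloor>q * real n\<rfloor> \<le> n"
  shows "\<bar>SW q n X y - SW q n X y'\<bar> \<le> \<bar>y - y'\<bar>"
proof -
  define k where "k = nat \<lfloor>q * real n\<rfloor>"
  define s where "s = sort (map (\<lambda>i. \<bar>X i - y\<bar>) [0..<n])"
  define s' where "s' = sort (map (\<lambda>i. \<bar>X i - y'\<bar>) [0..<n])"
  have np: "real n > 0" using n by simp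
  have "SW q n X y - SW q n X y' = (\<Sum>j<k. s' ! j - s ! j) / real n"
    unfolding SW_def k_def[symmetric] s_def[symmetric] s'_def[symmetric]
    by (simp add: diff_divide_distrib[symmetric] sum_subtractf[symmetric])
  moreover have "\<bar>\<Sum>j<k. s' ! j - s ! j\<bar> \<le> real k * \<bar>y - y'\<bar>"
  proof -
    have "\<bar>\<Sum>j<k. s' ! j - s ! j\<bar> \<le> (\<Sum>j<k. \<bar>s' ! j - s ! j\<bar>)" by (rule sum_abs)
    also have "\<dots> \<le> (\<Sum>j<k. \<bar>y - y'\<bar>)"
    proof (rule sum_mono)
      fix j assume "j \<in> {..<k}"
      then have j: "j < n" using k by (simp add: k_def)
      show "\<bar>s' ! j - s ! j\<bar> \<le> \<bar>y - y'\<bar>" unfolding s_def s'_def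
        by (rule sort_lip_abs[OF j]) linarith
    qed
    finally show ?thesis by simp
  qed
  moreover have "real k \<le> real n" using k by (simp add: k_def)
  ultimately have b: "\<bar>\<Sum>j<k. s' ! j - s ! j\<bar> \<le> real n * \<bar>y - y'\<bar>"
    by (meson abs_ge_zero mult_right_mono order_trans)
  then have "\<bar>\<Sum>j<k. s' ! j - s ! j\<bar> / real n \<le> \<bar>y - y'\<bar>"
    using np by (simp add: divide_le_eq mult.commute)
  with \<open>SW q n X y - SW q n X y' = _\<close> show ?thesis using np by (simp add: abs_divide)
qed

lemma SW_bounds:
  assumes n: "n \<ge> 1" and k: "nat \<lfloor>q * real n\<rfloor> \<le> n"
    and X: "\<And>i. i < n \<Longrightarrow> X i \<in> {0..1}" and y: "y \<in> {0..1}"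
  shows "0 \<le> SW q n X y" "SW q n X y \<le> 1"
proof -
  define k where "k = nat \<lfloor>q * real n\<rfloor>"
  define s where "s = sort (map (\<lambda>i. \<bar>X i - y\<bar>) [0..<n])"
  have np: "real n > 0" using n by simp
  have sb: "0 \<le> 1 - s ! j \<and> 1 - s ! j \<le> 1" if "j < k" for j
  proof -
    have "j < n" using that k by (simp add: k_def)
    then obtain i where "i < n" "s ! j = \<bar>X i - y\<bar>" using sort_mem unfolding s_def by blast
    then show ?thesis using X[of i] y by auto
  qed
  have S: "SW q n X y = (\<Sum>j<k. 1 - s ! j) / real n" by (simp add: SW_def k_def s_def)
  have "0 \<le> (\<Sum>j<k. 1 - s ! j)" by (rule sum_nonneg) (use sb in auto)
  then show "0 \<le> SW q n X y" unfolding S using np by simp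
  have "(\<Sum>j<k. 1 - s ! j) \<le> (\<Sum>j<k. 1)" by (rule sum_mono) (use sb in auto)
  also have "\<dots> \<le> real n" using k by (simp add: k_def)
  finally show "SW q n X y \<le> 1" unfolding S using np by simp
qed

definition j0 :: "nat \<Rightarrow> nat" where "j0 n = nat \<lfloor>1/2 * real (n - 1)\<rfloor>"

lemma j0_props: assumes "n \<ge> 1"
  shows "j0 n < n" "real n / 2 \<le> real (j0 n) + 1" "real (j0 n) < real n / 2"
proof -
  have h: "1/2 * real (n - 1) = real (n - 1) / real (2::nat)" by simp
  have jd: "j0 n = (n - 1) div 2" unfolding j0_def h floor_divide_of_nat_eq by simp
  have c1: "n \<le> 2 * j0 n + 2" unfolding jd by linarith
  have c2: "2 * j0 n < n" unfolding jd using assms by linarith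
  show "j0 n < n" using c2 by linarith
  have "real n \<le> 2 * real (j0 n) + 2" using c1 by linarith
  then show "real n / 2 \<le> real (j0 n) + 1" by linarith
  have "2 * real (j0 n) < real n" using c2 by linarith
  then show "real (j0 n) < real n / 2" by linarith
qed

lemma PM_eq: "PM (1/2) n X = sort (map X [0..<n]) ! j0 n"
  by (simp add: PM_def j0_def)

lemma PM_le: assumes "n \<ge> 1" "PM (1/2) n X \<le> t"
  shows "real (card {i. i < n \<and> X i \<le> t}) / real n \<ge> 1/2"
proof -
  have "j0 n < card {i. i < n \<and> X i \<le> t}"
    using sort_count[OF j0_props(1)[OF assms(1)], of X t] assms(2) by (simp add: PM_eq)
  then have "real (j0 n) + 1 \<le> real (card {i. i < n \<and> X i \<le> t})" by linarith
  then have "real n / 2 \<le> real (card {i. i < n \<and> X i \<le> t})" using j0_props(2)[OF assms(1)] by linarith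
  then show ?thesis using assms(1) by (simp add: field_simps)
qed

lemma PM_gt: assumes "n \<ge> 1" "\<not> PM (1/2) n X \<le> t"
  shows "real (card {i. i < n \<and> X i \<le> t}) / real n < 1/2"
proof -
  have "\<not> j0 n < card {i. i < n \<and> X i \<le> t}"
    using sort_count[OF j0_props(1)[OF assms(1)], of X t] assms(2) by (simp add: PM_eq)
  then have "real (card {i. i < n \<and> X i \<le> t}) \<le> real (j0 n)" by linarith
  then have "real (card {i. i < n \<and> X i \<le> t}) < real n / 2" using j0_props(3)[OF assms(1)] by linarith
  then show ?thesis using assms(1) by (simp add: field_simps)
qed

lemma PM_01: assumes "n \<ge> 1" "\<And>i. i < n \<Longrightarrow> X i \<in> {0..1}" shows "PM (1/2) n X \<in> {0..1}"
proof -
  obtain i where "i < n" "PM (1/2) n X = X i"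
    using sort_mem[OF j0_props(1)[OF assms(1)], of X] by (auto simp: PM_eq)
  then show ?thesis using assms(2) by simp
qed

lemma ostat_meas:
  fixes g :: "nat \<Rightarrow> 'a \<Rightarrow> real"
  assumes g: "\<And>i. i < n \<Longrightarrow> g i \<in> borel_measurable M" and j: "j < n"
  shows "(\<lambda>\<omega>. sort (map (\<lambda>i. g i \<omega>) [0..<n]) ! j) \<in> borel_measurable M"
proof (subst borel_measurable_iff_le, intro allI)
  fix a
  define h where "h \<omega> = (\<Sum>i<n. if g i \<omega> \<le> a then 1 else 0 :: real)" for \<omega>
  have hm: "h \<in> borel_measurable M" unfolding h_def
    by (intro borel_measurable_sum) (use g in measurable)
  have "{w \<in> space M. sort (map (\<lambda>i. g i w) [0..<n]) ! j \<le> a} = {w \<in> space M. real j < h w}"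
  proof -
    have "sort (map (\<lambda>i. g i w) [0..<n]) ! j \<le> a \<longleftrightarrow> real j < h w" for w
    proof -
      have "h w = real (card {i. i < n \<and> g i w \<le> a})" unfolding h_def by (rule sum_if_card)
      then have "h w = real (card {i. i < n \<and> g i w \<le> a})" .
      then show ?thesis using sort_count[OF j, of "\<lambda>i. g i w" a] by simp
    qed
    then show ?thesis by simp
  qed
  also have "\<dots> \<in> sets M" using hm by measurable
  finally show "{w \<in> space M. sort (map (\<lambda>i. g i w) [0..<n]) ! j \<le> a} \<in> sets M" .
qed

lemma min_diff: "\<bar>min a b - min c e\<bar> \<le> \<bar>a - c\<bar> + \<bar>b - e\<bar>" for a b c e :: real
  by (smt (verit) min_def)

context dsetup begin

lemma det_SW:
  assumes n: "n \<ge> 1" and m: "m \<ge> 1" and X: "\<And>i. i < n \<Longrightarrow> X i \<in> {0..1}"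
    and good: "\<And>l. l < m \<Longrightarrow> \<bar>real (card {i. i < n \<and> \<bar>X i - 1/2\<bar> \<le> real l / real m}) / real n
                     - G (1/2) (real l / real m)\<bar> \<le> \<delta>"
  shows "\<bar>SW q n X (1/2) - (q - W_cost \<mu> q (1/2))\<bar>
          \<le> 3 * \<bar>real (nat \<lfloor>q * real n\<rfloor>) / real n - q\<bar> + 1 / real m + \<delta>"
proof -
  define k where "k = nat \<lfloor>q * real n\<rfloor>"
  have kn: "k \<le> n" using k_le[OF q0 q1] by (simp add: k_def)
  define d where "d i = \<bar>X i - 1/2\<bar>" for i
  define s where "s = sort (map d [0..<n])"
  define N where "N l = card {i. i < n \<and> d i \<le> real l / real m}" for l
  define Gl where "Gl l = G (1/2) (real l / real m)" for l
  define a where "a = real k / real n"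
  have np: "real n > 0" using n by simp
  have mp: "real m > 0" using m by simp
  have a1: "a \<le> 1" using kn np by (simp add: a_def divide_le_eq)
  have s01: "0 \<le> s ! j \<and> s ! j \<le> 1" if "j < k" for j
  proof -
    have "j < n" using that kn by simp
    then obtain i where "i < n" "s ! j = d i" using sort_mem unfolding s_def by blast
    then show ?thesis using X[of i] by (auto simp: d_def)
  qed
  define S where "S = (\<Sum>j<k. s ! j)"
  define Sc where "Sc = (\<Sum>j<k. cg m (s ! j))"
  have S1: "S \<le> Sc" unfolding S_def Sc_def
    by (rule sum_mono) (use s01 cg_bounds(1)[OF m] in auto)
  have "Sc \<le> (\<Sum>j<k. s ! j + 1 / real m)" unfolding Sc_def
    by (rule sum_mono) (use s01 cg_bounds(2)[OF m] in auto)
  also have "\<dots> = S + real k / real m" by (simp add: S_def sum.distrib)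
  finally have S2: "Sc \<le> S + real k / real m" .
  have Sc_eq: "Sc = (\<Sum>l<m. (real k - real (min k (N l)))) / real m"
    unfolding Sc_def s_def N_def by (rule sum_sorted_grid[OF kn])
  have SW_eq: "SW q n X (1/2) = (real k - S) / real n"
  proof -
    have dd: "d = (\<lambda>i. \<bar>X i - 1/2\<bar>)" by (simp add: d_def fun_eq_iff)
    have "SW q n X (1/2) = (\<Sum>j<k. 1 - s ! j) / real n" by (simp add: SW_def k_def s_def dd)
    also have "(\<Sum>j<k. 1 - s ! j) = real k - S" by (simp add: S_def sum_subtractf)
    finally show ?thesis .
  qed
  have term_eq: "(real k - real (min k (N l))) / real n = a - min a (real (N l) / real n)" for l
  proof (cases "k \<le> N l")
    case True
    then have "a \<le> real (N l) / real n" unfolding a_def using np by (simp add: divide_right_mono)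
    then show ?thesis using True by (simp add: a_def min_def)
  next
    case False
    then have "real (N l) / real n \<le> a" unfolding a_def using np by (simp add: divide_right_mono)
    then have "min a (real (N l) / real n) = real (N l) / real n" by simp
    then show ?thesis using False by (simp add: a_def diff_divide_distrib)
  qed
  define E where "E = Sc / real n"
  have E_eq: "E = (\<Sum>l<m. (a - min a (real (N l) / real n))) / real m"
  proof -
    have "E = (\<Sum>l<m. (real k - real (min k (N l)))) / real n / real m"
      by (simp add: E_def Sc_eq)
    also have "(\<Sum>l<m. (real k - real (min k (N l)))) / real n = (\<Sum>l<m. (real k - real (min k (N l))) / real n)"
      by (rule sum_divide_distrib)
    also have "\<dots> = (\<Sum>l<m. (a - min a (real (N l) / real n)))" by (simp add: term_eq)
    finally show ?thesis .
  qed
  have V_eq: "V (1/2) m = (\<Sum>l<m. (q - min q (Gl l))) / real m" by (simp add: V_def Gl_def)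
  define t where "t l = (a - min a (real (N l) / real n)) - (q - min q (Gl l))" for l
  have tb: "\<bar>t l\<bar> \<le> 2 * \<bar>a - q\<bar> + \<delta>" if l: "l < m" for l
  proof -
    have g: "\<bar>real (N l) / real n - Gl l\<bar> \<le> \<delta>" using good[OF l] by (simp add: N_def Gl_def d_def)
    have "\<bar>min a (real (N l) / real n) - min q (Gl l)\<bar> \<le> \<bar>a - q\<bar> + \<bar>real (N l) / real n - Gl l\<bar>"
      by (rule min_diff)
    then have h: "\<bar>min a (real (N l) / real n) - min q (Gl l)\<bar> \<le> \<bar>a - q\<bar> + \<delta>" using g by linarith
    have "a - q \<le> \<bar>a - q\<bar>" "q - a \<le> \<bar>a - q\<bar>" by auto
    then show ?thesis using h unfolding t_def by (simp add: abs_le_iff)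
  qed
  have EV: "\<bar>E - V (1/2) m\<bar> \<le> 2 * \<bar>a - q\<bar> + \<delta>"
  proof -
    have "E - V (1/2) m = (\<Sum>l<m. t l) / real m"
      unfolding E_eq V_eq t_def by (simp add: sum_subtractf diff_divide_distrib)
    moreover have "\<bar>\<Sum>l<m. t l\<bar> \<le> real m * (2 * \<bar>a - q\<bar> + \<delta>)"
    proof -
      have "\<bar>\<Sum>l<m. t l\<bar> \<le> (\<Sum>l<m. \<bar>t l\<bar>)" by (rule sum_abs)
      also have "\<dots> \<le> (\<Sum>l<m. 2 * \<bar>a - q\<bar> + \<delta>)" by (rule sum_mono) (use tb in auto)
      finally show ?thesis by simp
    qed
    ultimately show ?thesis using mp by (simp add: abs_divide divide_le_eq mult.commute)
  qed
  have W1: "W_cost \<mu> q (1/2) \<le> V (1/2) m" using W_bounds(1)[of "1/2" m] m by simp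
  have W2: "V (1/2) m \<le> W_cost \<mu> q (1/2) + q / real m" using W_bounds(2)[of "1/2" m] m by simp
  have qm: "q / real m \<le> 1 / real m" using q1 mp by (simp add: divide_right_mono)
  have km: "real k / real m / real n \<le> 1 / real m"
  proof -
    have "real k / real m / real n = a / real m" by (simp add: a_def)
    also have "\<dots> \<le> 1 / real m" using a1 mp by (simp add: divide_right_mono)
    finally show ?thesis .
  qed
  have SE1: "S / real n \<le> E" unfolding E_def using S1 np by (simp add: divide_right_mono)
  have SE2: "E \<le> S / real n + real k / real m / real n"
  proof -
    have "Sc / real n \<le> (S + real k / real m) / real n" using S2 np by (simp add: divide_right_mono)
    then show ?thesis by (simp add: E_def add_divide_distrib)
  qed
  have SWa: "SW q n X (1/2) = a - S / real n" unfolding SW_eq a_def by (simp add: diff_divide_distrib)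
  have "\<bar>SW q n X (1/2) - (q - W_cost \<mu> q (1/2))\<bar> \<le> 3 * \<bar>a - q\<bar> + 1 / real m + \<delta>"
  proof -
    have "a - q \<le> \<bar>a - q\<bar>" "q - a \<le> \<bar>a - q\<bar>" by auto
    then show ?thesis using EV W1 W2 qm km SE1 SE2 unfolding SWa
      by (simp add: abs_le_iff)
  qed
  then show ?thesis by (simp add: a_def k_def)
qed

end

context dsetup begin

abbreviation PP :: "nat \<Rightarrow> (nat \<Rightarrow> real) measure" where
  "PP n \<equiv> PiM {..<n} (\<lambda>_. \<mu>)"

definition badA :: "nat \<Rightarrow> real set \<Rightarrow> real \<Rightarrow> (nat \<Rightarrow> real) set" where
  "badA n A \<gamma> = {X \<in> space (PP n). \<gamma> \<le> \<bar>(\<Sum>i<n. indicator A (X i)) / real n - measure \<mu> A\<bar>}"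

definition L0 :: real where "L0 = q - W_cost \<mu> q (1/2)"

lemma PP_prob: "prob_space (PP n)"
  by (rule prob_space_PiM) (use prob in auto)

lemma comp_meas: "i < n \<Longrightarrow> (\<lambda>X. X i) \<in> borel_measurable (PP n)"
proof -
  assume i: "i < n"
  have "(\<lambda>X. X i) \<in> measurable (PP n) \<mu>" by (rule measurable_component_singleton) (use i in simp)
  moreover have "measurable (PP n) \<mu> = measurable (PP n) borel" by (rule measurable_cong_sets) simp_all
  ultimately show ?thesis by simp
qed

lemma bad_sets: "A \<in> sets borel \<Longrightarrow> badA n A \<gamma> \<in> sets (PP n)"
proof -
  assume A: "A \<in> sets borel"
  have "(\<lambda>X. (\<Sum>i<n. indicator A (X i)) / real n - measure \<mu> A :: real) \<in> borel_measurable (PP n)"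
    by (intro borel_measurable_diff borel_measurable_divide borel_measurable_sum borel_measurable_const
        measurable_compose[OF comp_meas borel_measurable_indicator[OF A]]) auto
  then show ?thesis unfolding badA_def by measurable
qed

lemma PM_meas: "n \<ge> 1 \<Longrightarrow> (\<lambda>X. PM (1/2) n X) \<in> borel_measurable (PP n)"
  unfolding PM_eq using ostat_meas[of n "\<lambda>i X. X i" "PP n" "j0 n"] comp_meas j0_props(1) by simp

lemma h_meas: "n \<ge> 1 \<Longrightarrow> (\<lambda>X. SW q n X (PM (1/2) n X)) \<in> borel_measurable (PP n)"
proof -
  assume n: "n \<ge> 1"
  have kn: "nat \<lfloor>q * real n\<rfloor> \<le> n" using k_le[OF q0 q1] .
  have g: "(\<lambda>X. \<bar>X i - PM (1/2) n X\<bar>) \<in> borel_measurable (PP n)" if "i < n" for i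
    by (intro borel_measurable_abs borel_measurable_diff comp_meas PM_meas that n)
  have "(\<lambda>X. sort (map (\<lambda>i. \<bar>X i - PM (1/2) n X\<bar>) [0..<n]) ! j) \<in> borel_measurable (PP n)" if "j < n" for j
    using ostat_meas[of n "\<lambda>i X. \<bar>X i - PM (1/2) n X\<bar>" "PP n" j] g that by simp
  then show ?thesis unfolding SW_def using kn
    by (intro borel_measurable_divide borel_measurable_sum borel_measurable_diff borel_measurable_const) auto
qed

lemma AE01n: "AE X in PP n. \<forall>i\<in>{..<n}. X i \<in> {0..1}"
proof (rule AE_finite_allI)
  fix i assume "i \<in> {..<n}"
  then show "AE X in PP n. X i \<in> {0..1}"
    using AE_PiM_component[of "{..<n}" "\<lambda>_. \<mu>" i "\<lambda>x. x \<in> {0..1}"] prob AE_01 by simp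
qed simp

lemma L0_bounds: "0 \<le> L0" "L0 \<le> 1"
proof -
  have "0 \<le> W_cost \<mu> q (1/2)"
    unfolding W_cost_def set_lebesgue_integral_def
    by (rule integral_nonneg_AE) (simp add: indicator_def)
  moreover have "W_cost \<mu> q (1/2) \<le> q"
  proof -
    have "W_cost \<mu> q (1/2) \<le> V (1/2) 1" using W_bounds(1)[of "1/2" 1] by simp
    also have "\<dots> \<le> q" using G_nonneg[of "1/2" 0] q0 by (simp add: V_def)
    finally show ?thesis .
  qed
  ultimately show "0 \<le> L0" "L0 \<le> 1" using q1 by (auto simp: L0_def)
qed

lemma main_bound:
  assumes n: "n \<ge> 1" and m: "m \<ge> 1" and d: "\<delta> > 0"
  defines "glo \<equiv> 1/2 - F (1/2 - \<delta>)" and "ghi \<equiv> F (1/2 + \<delta>) - 1/2"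
  defines "Al \<equiv> \<lambda>l::nat. {1/2 - real l / real m..1/2 + real l / real m}"
  shows "\<bar>exp_SW \<mu> q (1/2) n - L0\<bar> \<le> 2 * \<delta> + 3 * \<bar>real (nat \<lfloor>q * real n\<rfloor>) / real n - q\<bar> + 1 / real m
     + (measure (PP n) (badA n {..1/2 - \<delta>} glo) + measure (PP n) (badA n {..1/2 + \<delta>} ghi)
        + (\<Sum>l<m. measure (PP n) (badA n (Al l) \<delta>)))"
proof -
  interpret P: prob_space "PP n" by (rule PP_prob)
  define c where "c = 2 * \<delta> + 3 * \<bar>real (nat \<lfloor>q * real n\<rfloor>) / real n - q\<bar> + 1 / real m"
  define Bad where "Bad = badA n {..1/2 - \<delta>} glo \<union> (badA n {..1/2 + \<delta>} ghi \<union> (\<Union>l<m. badA n (Al l) \<delta>))"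
  define h where "h X = SW q n X (PM (1/2) n X)" for X
  have kn: "nat \<lfloor>q * real n\<rfloor> \<le> n" using k_le[OF q0 q1] .
  have Al_sets: "Al l \<in> sets borel" for l unfolding Al_def by simp
  have Bad_sets: "Bad \<in> sets (PP n)" unfolding Bad_def
    by (intro sets.Un sets.finite_UN bad_sets Al_sets) auto
  have pw: "\<bar>h X - L0\<bar> \<le> c + indicator Bad X" if X: "\<forall>i\<in>{..<n}. X i \<in> {0..1}" and XS: "X \<in> space (PP n)" for X
  proof -
    have X': "\<And>i. i < n \<Longrightarrow> X i \<in> {0..1}" using X by simp
    have PM01: "PM (1/2) n X \<in> {0..1}" by (rule PM_01[OF n X'])
    have h01: "0 \<le> h X" "h X \<le> 1" unfolding h_def using SW_bounds[OF n kn X' PM01] by auto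
    show ?thesis
    proof (cases "X \<in> Bad")
      case True
      have "0 \<le> c" unfolding c_def using d m by simp
      then show ?thesis using True h01 L0_bounds by (simp add: abs_le_iff)
    next
      case False
      have nlo: "X \<notin> badA n {..1/2 - \<delta>} glo" and nhi: "X \<notin> badA n {..1/2 + \<delta>} ghi"
        and nl: "\<And>l. l < m \<Longrightarrow> X \<notin> badA n (Al l) \<delta>" using False by (auto simp: Bad_def)
      have PMc: "\<bar>PM (1/2) n X - 1/2\<bar> \<le> \<delta>"
      proof (rule ccontr)
        assume "\<not> ?thesis"
        then consider "PM (1/2) n X \<le> 1/2 - \<delta>" | "\<not> PM (1/2) n X \<le> 1/2 + \<delta>" by linarith
        then show False
        proof cases
          case 1
          define r where "r = real (card {i. i < n \<and> X i \<le> 1/2 - \<delta>}) / real n"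
          have r: "1/2 \<le> r" unfolding r_def by (rule PM_le[OF n 1])
          have e: "(\<Sum>i<n. indicator {..1/2 - \<delta>} (X i)) / real n - measure \<mu> {..1/2 - \<delta>} = r - F (1/2 - \<delta>)"
            by (simp add: sum_ind_card r_def Iic_eq)
          have "glo \<le> \<bar>(\<Sum>i<n. indicator {..1/2 - \<delta>} (X i)) / real n - measure \<mu> {..1/2 - \<delta>}\<bar>"
            unfolding e glo_def using r abs_ge_self[of "r - F (1/2 - \<delta>)"] by linarith
          then show False using nlo XS by (simp add: badA_def)
        next
          case 2
          define r where "r = real (card {i. i < n \<and> X i \<le> 1/2 + \<delta>}) / real n"
          have r: "r < 1/2" unfolding r_def by (rule PM_gt[OF n 2])
          have e: "(\<Sum>i<n. indicator {..1/2 + \<delta>} (X i)) / real n - measure \<mu> {..1/2 + \<delta>} = r - F (1/2 + \<delta>)"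
            by (simp add: sum_ind_card r_def Iic_eq)
          have "ghi \<le> \<bar>(\<Sum>i<n. indicator {..1/2 + \<delta>} (X i)) / real n - measure \<mu> {..1/2 + \<delta>}\<bar>"
            unfolding e ghi_def using r abs_ge_minus_self[of "r - F (1/2 + \<delta>)"] by linarith
          then show False using nhi XS by (simp add: badA_def)
        qed
      qed
      have good: "\<bar>real (card {i. i < n \<and> \<bar>X i - 1/2\<bar> \<le> real l / real m}) / real n
                     - G (1/2) (real l / real m)\<bar> \<le> \<delta>" if l: "l < m" for l
      proof -
        have "(\<Sum>i<n. indicator (Al l) (X i)) = real (card {i. i < n \<and> X i \<in> Al l})"
          by (rule sum_ind_card)
        also have "{i. i < n \<and> X i \<in> Al l} = {i. i < n \<and> \<bar>X i - 1/2\<bar> \<le> real l / real m}"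
          unfolding Al_def by (auto simp: abs_le_iff)
        finally have e: "(\<Sum>i<n. indicator (Al l) (X i)) = real (card {i. i < n \<and> \<bar>X i - 1/2\<bar> \<le> real l / real m})" .
        have "measure \<mu> (Al l) = G (1/2) (real l / real m)" by (simp add: Al_def G_def)
        then show ?thesis using nl[OF l] XS e by (simp add: badA_def)
      qed
      have D: "\<bar>SW q n X (1/2) - (q - W_cost \<mu> q (1/2))\<bar>
          \<le> 3 * \<bar>real (nat \<lfloor>q * real n\<rfloor>) / real n - q\<bar> + 1 / real m + \<delta>"
        by (rule det_SW[OF n m X' good])
      have Lp: "\<bar>h X - SW q n X (1/2)\<bar> \<le> \<bar>PM (1/2) n X - 1/2\<bar>"
        unfolding h_def by (rule SW_lip[OF n kn])
      have "\<bar>h X - L0\<bar> \<le> c" using D Lp PMc unfolding c_def L0_def by linarith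
      then show ?thesis using False by simp
    qed
  qed
  have hm: "h \<in> borel_measurable (PP n)" unfolding h_def by (rule h_meas[OF n])
  have AEX: "AE X in PP n. \<forall>i\<in>{..<n}. X i \<in> {0..1}" by (rule AE01n)
  have AEh: "AE X in PP n. \<bar>h X - L0\<bar> \<le> c + indicator Bad X"
    using AEX by (rule AE_mp) (auto intro!: AE_I2 pw)
  have hint: "integrable (PP n) h"
  proof (rule P.integrable_const_bound[where B=1])
    show "AE X in PP n. norm (h X) \<le> 1"
      using AEX
    proof (rule AE_mp)
      show "AE X in PP n. (\<forall>i\<in>{..<n}. X i \<in> {0..1}) \<longrightarrow> norm (h X) \<le> 1"
      proof (rule AE_I2, intro impI)
        fix X :: "nat \<Rightarrow> real" assume X: "\<forall>i\<in>{..<n}. X i \<in> {0..1}"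
        then have X': "\<And>i. i < n \<Longrightarrow> X i \<in> {0..1}" by simp
        have PM01: "PM (1/2) n X \<in> {0..1}" by (rule PM_01[OF n X'])
        show "norm (h X) \<le> 1" unfolding h_def using SW_bounds[OF n kn X' PM01] by simp
      qed
    qed
  qed (rule hm)
  have intBad: "integrable (PP n) (indicator Bad :: _ \<Rightarrow> real)"
    by (rule integrable_real_indicator[OF Bad_sets]) (use P.emeasure_finite[of Bad] in \<open>simp add: less_top[symmetric]\<close>)
  have Bint: "integrable (PP n) (\<lambda>X. c + indicator Bad X)"
    by (intro Bochner_Integration.integrable_add intBad) simp
  have hLint: "integrable (PP n) (\<lambda>X. h X - L0)" using hint by auto
  have IB: "(\<integral>X. c + indicator Bad X \<partial>PP n) = c + measure (PP n) Bad"
  proof -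
    have "(\<integral>X. c + indicator Bad X \<partial>PP n) = (\<integral>X. c \<partial>PP n) + (\<integral>X. indicator Bad X \<partial>PP n)"
      by (rule Bochner_Integration.integral_add) (simp, rule intBad)
    moreover have "Bad \<inter> space (PP n) = Bad" using sets.sets_into_space[OF Bad_sets] by auto
    ultimately show ?thesis by (simp add: P.prob_space)
  qed
  have Ih: "(\<integral>X. h X - L0 \<partial>PP n) = exp_SW \<mu> q (1/2) n - L0"
  proof -
    have "(\<integral>X. h X - L0 \<partial>PP n) = (\<integral>X. h X \<partial>PP n) - (\<integral>X. L0 \<partial>PP n)"
      by (rule Bochner_Integration.integral_diff[OF hint]) simp
    then show ?thesis by (simp add: exp_SW_def h_def P.prob_space)
  qed
  have "(\<integral>X. h X - L0 \<partial>PP n) \<le> (\<integral>X. c + indicator Bad X \<partial>PP n)"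
    by (rule integral_mono_AE[OF hLint Bint]) (use AEh in \<open>auto elim!: eventually_mono simp: abs_le_iff\<close>)
  moreover have "(\<integral>X. -(h X - L0) \<partial>PP n) \<le> (\<integral>X. c + indicator Bad X \<partial>PP n)"
    by (rule integral_mono_AE[OF integrable_minus[OF hLint] Bint]) (use AEh in \<open>auto elim!: eventually_mono simp: abs_le_iff\<close>)
  moreover have "(\<integral>X. -(h X - L0) \<partial>PP n) = - (\<integral>X. h X - L0 \<partial>PP n)"
    by (rule Bochner_Integration.integral_minus)
  ultimately have "exp_SW \<mu> q (1/2) n - L0 \<le> c + measure (PP n) Bad"
    "-(exp_SW \<mu> q (1/2) n - L0) \<le> c + measure (PP n) Bad"
    using IB Ih by linarith+
  then have I1: "\<bar>exp_SW \<mu> q (1/2) n - L0\<bar> \<le> c + measure (PP n) Bad"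
    by (simp only: abs_le_iff)
  have "measure (PP n) Bad \<le> measure (PP n) (badA n {..1/2 - \<delta>} glo)
        + measure (PP n) (badA n {..1/2 + \<delta>} ghi \<union> (\<Union>l<m. badA n (Al l) \<delta>))"
    unfolding Bad_def by (rule measure_Un_le) (auto intro!: bad_sets sets.Un sets.finite_UN Al_sets)
  also have "measure (PP n) (badA n {..1/2 + \<delta>} ghi \<union> (\<Union>l<m. badA n (Al l) \<delta>))
      \<le> measure (PP n) (badA n {..1/2 + \<delta>} ghi) + measure (PP n) (\<Union>l<m. badA n (Al l) \<delta>)"
    by (rule measure_Un_le) (auto intro!: bad_sets sets.finite_UN Al_sets)
  also have "measure (PP n) (\<Union>l<m. badA n (Al l) \<delta>) \<le> (\<Sum>l<m. measure (PP n) (badA n (Al l) \<delta>))"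
    by (rule measure_UNION_le) (auto intro!: bad_sets Al_sets)
  finally have "measure (PP n) Bad \<le> measure (PP n) (badA n {..1/2 - \<delta>} glo) + measure (PP n) (badA n {..1/2 + \<delta>} ghi)
        + (\<Sum>l<m. measure (PP n) (badA n (Al l) \<delta>))" by simp
  then show ?thesis using I1 unfolding c_def by linarith
qed

end

lemma knq: assumes "0 < q" shows "(\<lambda>n. \<bar>real (nat \<lfloor>q * real n\<rfloor>) / real n - q\<bar>) \<longlonglongrightarrow> 0"
proof (rule tendsto_sandwich[where f="\<lambda>_. 0" and h="\<lambda>n. 1 / real n"])
  show "\<forall>\<^sub>F n in sequentially. 0 \<le> \<bar>real (nat \<lfloor>q * real n\<rfloor>) / real n - q\<bar>" by simp
  show "\<forall>\<^sub>F n in sequentially. \<bar>real (nat \<lfloor>q * real n\<rfloor>) / real n - q\<bar> \<le> 1 / real n"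
    using eventually_ge_at_top[of 1]
  proof eventually_elim
    case (elim n)
    have np: "real n > 0" using elim by simp
    have fl: "\<lfloor>q * real n\<rfloor> \<ge> 0" using assms by simp
    have r: "real (nat \<lfloor>q * real n\<rfloor>) = of_int \<lfloor>q * real n\<rfloor>" using fl by simp
    have l1: "of_int \<lfloor>q * real n\<rfloor> \<le> q * real n" by (rule of_int_floor_le)
    have l2: "q * real n < of_int \<lfloor>q * real n\<rfloor> + 1" by (rule real_of_int_floor_add_one_gt)
    have "\<bar>real (nat \<lfloor>q * real n\<rfloor>) - q * real n\<bar> \<le> 1" using r l1 l2 by linarith
    moreover have "real (nat \<lfloor>q * real n\<rfloor>) / real n - q = (real (nat \<lfloor>q * real n\<rfloor>) - q * real n) / real n"
      using np by (simp add: field_simps)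
    ultimately show ?case using np by (simp add: abs_divide divide_right_mono)
  qed
  show "(\<lambda>n. 0) \<longlonglongrightarrow> (0::real)" by simp
  show "(\<lambda>n. 1 / real n) \<longlonglongrightarrow> (0::real)" by (rule lim_1_over_n)
qed

context dsetup begin

lemma conv: "exp_SW \<mu> q (1/2) \<longlonglongrightarrow> L0"
proof (rule tendstoI)
  fix \<epsilon> :: real assume e: "\<epsilon> > 0"
  obtain m0 where m0: "inverse (real (Suc m0)) < \<epsilon> / 4" using reals_Archimedean[of "\<epsilon> / 4"] e by auto
  define m where "m = Suc m0"
  have m: "m \<ge> 1" by (simp add: m_def)
  have m1: "1 / real m < \<epsilon> / 4" using m0 by (simp add: m_def inverse_eq_divide)
  define \<delta> where "\<delta> = \<epsilon> / 8"
  have d: "\<delta> > 0" using e by (simp add: \<delta>_def)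
  define glo where "glo = 1/2 - F (1/2 - \<delta>)"
  define ghi where "ghi = F (1/2 + \<delta>) - 1/2"
  define Al where "Al = (\<lambda>l::nat. {1/2 - real l / real m..1/2 + real l / real m})"
  have glo: "glo > 0" using median_lo[OF d] by (simp add: glo_def)
  have ghi: "ghi > 0" using median_hi[OF d] by (simp add: ghi_def)
  define b where "b n = 2 * \<delta> + 3 * \<bar>real (nat \<lfloor>q * real n\<rfloor>) / real n - q\<bar> + 1 / real m
     + (measure (PP n) (badA n {..1/2 - \<delta>} glo) + measure (PP n) (badA n {..1/2 + \<delta>} ghi)
        + (\<Sum>l<m. measure (PP n) (badA n (Al l) \<delta>)))" for n
  have lb: "(\<lambda>n. measure (PP n) (badA n A \<gamma>)) \<longlonglongrightarrow> 0" if "A \<in> sets borel" "\<gamma> > 0" for A \<gamma>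
    unfolding badA_def by (rule lln[OF prob sets_mu that])
  have "b \<longlonglongrightarrow> 2 * \<delta> + 3 * 0 + 1 / real m + (0 + 0 + (\<Sum>l<m. 0))"
    unfolding b_def
    by (intro tendsto_intros knq[OF q0] lb tendsto_sum glo ghi d) (auto simp: Al_def)
  then have "b \<longlonglongrightarrow> 2 * \<delta> + 1 / real m" by simp
  moreover have "2 * \<delta> + 1 / real m < \<epsilon>" using m1 e unfolding \<delta>_def by linarith
  ultimately have ev: "\<forall>\<^sub>F n in sequentially. b n < \<epsilon>" by (rule order_tendstoD(2))
  show "\<forall>\<^sub>F n in sequentially. dist (exp_SW \<mu> q (1/2) n) L0 < \<epsilon>"
    using ev eventually_ge_at_top[of 1]
  proof eventually_elim
    case (elim n)
    have "\<bar>exp_SW \<mu> q (1/2) n - L0\<bar> \<le> b n"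
      unfolding b_def glo_def ghi_def Al_def by (rule main_bound[OF elim(2) m d])
    then show ?case using elim(1) by (simp add: dist_real_def)
  qed
qed

lemma final: "PM_optimal \<mu> q (1/2)"
  unfolding PM_optimal_def
proof (intro exI conjI)
  show "exp_SW \<mu> q (1/2) \<longlonglongrightarrow> L0" by (rule conv)
  show "\<exists>y0\<in>{0..1}. L0 = q - W_cost \<mu> q y0 \<and> (\<forall>y\<in>{0..1}. q - W_cost \<mu> q y \<le> L0)"
  proof (rule bexI[where x="1/2"])
    show "L0 = q - W_cost \<mu> q (1/2) \<and> (\<forall>y\<in>{0..1}. q - W_cost \<mu> q y \<le> L0)"
      using W_opt by (auto simp: L0_def)
  qed simp
qed

end

theorem theorem3p9:
  fixes f :: "real \<Rightarrow> real" and q :: real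
  assumes "continuous_on {0..1} f"
    and "\<forall>x\<in>{0..1}. f x \<ge> 0"
    and "prob_space (dens_measure f)"
    and "symmetric_density f"
    and "single_peaked f"
    and "0 < q" and "q < 1"
  shows "PM_optimal (dens_measure f) q (1/2)"
proof -
  interpret dsetup f q using assms by (simp add: dsetup_def)
  show ?thesis by (rule final)
qed

end
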